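(* Let $k,n\in\mathbb{N}$, $N=\{0,\dots,k\}$, and let $\mathcal{M}_n(N)$ be the set of multisets of cardinality $n$ with elements in $N$. For $x\in\mathcal{M}_n(N)$ let $\overrightarrow{x}$ be the non-decreasing sequence of length $n$ listing the elements of $x$, and let $m=(k,k,\dots,k)$ (length $n$). Define $\rho(x)=\mathrm{rank}(m-\overrightarrow{x})$, where $m-\overrightarrow{x}$ is the entrywise difference (a non-increasing sequence over $N$) and $\mathrm{rank}(x_1,\dots,x_n)=\sum_{i=1}^n\binom{n+x_i-i}{x_i-1}$ (with $\binom{a}{-1}=0$). Then $\rho$ is a bijection from $\mathcal{M}_n(N)$ onto an initial segment $\{0,\dots,|\mathcal{M}_n(N)|-1\}$ of $\mathbb{N}_0$ such that for all $x,y\in\mathcal{M}_n(N)$: $x$ is strictly fairer than $y$ (in the maximization sense) iff $\rho(x)<\rho(y)$.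
   Context: Max-min fair comparison for maximization: $x$ is strictly fairer than $y$ iff $\overrightarrow{y}<_{\mathrm{lex}}\overrightarrow{x}$, where $<_{\mathrm{lex}}$ is the strict lexicographic order on sequences of length $n$. *)

theory Defs
  imports Main "HOL-Library.Multiset"
begin

definition Mset_n :: "nat \<Rightarrow> nat \<Rightarrow> nat multiset set" where
  "Mset_n k n = {x. size x = n \<and> set_mset x \<subseteq> {0..k}}"

definition vec :: "nat multiset \<Rightarrow> nat list" where
  "vec x = sorted_list_of_multiset x"

definition lex_less :: "nat list \<Rightarrow> nat list \<Rightarrow> bool" where
  "lex_less xs ys \<longleftrightarrow> (xs, ys) \<in> lexord {(a, b). a < b}"

definition fairer :: "nat multiset \<Rightarrow> nat multiset \<Rightarrow> bool" where
  "fairer x y \<longleftrightarrow> lex_less (vec y) (vec x)"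

text \<open>rank(x_1,...,x_n) = sum_{i=1}^n binom(n + x_i - i, x_i - 1), binom(a,-1) = 0.
  Index i here is 0-based, so the 1-based index is i+1.\<close>
definition rank :: "nat list \<Rightarrow> nat" where
  "rank xs = (\<Sum>i<length xs. if xs ! i = 0 then 0
      else (length xs + xs ! i - (i + 1)) choose (xs ! i - 1))"

definition rho :: "nat \<Rightarrow> nat multiset \<Rightarrow> nat" where
  "rho k x = rank (map (\<lambda>a. k - a) (vec x))"

end

theory Submission
  imports Defs
begin

fun rk :: "nat list \<Rightarrow> nat" where
  "rk [] = 0"
| "rk (a # z) = (if a = 0 then 0 else (length z + a) choose (a - 1)) + rk z"

lemma rank_rk: "rank z = rk z"
proof (induction z)
  case Nil then show ?case by (simp add: rank_def)
next
  case (Cons a z)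
  define f where "f i = (if (a # z) ! i = 0 then 0
      else (length (a # z) + (a # z) ! i - (i + 1)) choose ((a # z) ! i - 1))" for i
  have r: "rank (a # z) = f 0 + (\<Sum>i<length z. f (Suc i))"
    unfolding rank_def f_def by (simp only: length_Cons sum.lessThan_Suc_shift)
  have "(\<Sum>i<length z. f (Suc i)) = rank z"
    unfolding rank_def by (rule sum.cong) (auto simp: f_def)
  moreover have "f 0 = (if a = 0 then 0 else (length z + a) choose (a - 1))"
    by (simp add: f_def)
  ultimately have "rank (a # z) = (if a = 0 then 0 else (length z + a) choose (a - 1)) + rank z"
    using r by simp
  then show ?case using Cons by simp
qed

definition SL :: "nat \<Rightarrow> nat \<Rightarrow> nat \<Rightarrow> nat list set" where
  "SL n lo hi = {xs. length xs = n \<and> sorted xs \<and> set xs \<subseteq> {lo..hi}}"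

lemma finite_SL: "finite (SL n lo hi)"
proof -
  have "SL n lo hi \<subseteq> {xs. set xs \<subseteq> {lo..hi} \<and> length xs = n}" by (auto simp: SL_def)
  then show ?thesis using finite_lists_length_eq[of "{lo..hi}" n] finite_subset by auto
qed

lemma SL_empty: "hi < lo \<Longrightarrow> SL (Suc n) lo hi = {}"
  by (auto simp: SL_def length_Suc_conv)

lemma SL_0: "SL 0 lo hi = {[]}"
  by (auto simp: SL_def)

lemma SL_decomp:
  assumes "lo \<le> hi" shows "SL (Suc n) lo hi = Cons lo ` SL n lo hi \<union> SL (Suc n) (Suc lo) hi"
proof
  show "SL (Suc n) lo hi \<subseteq> Cons lo ` SL n lo hi \<union> SL (Suc n) (Suc lo) hi"
  proof
    fix ys assume "ys \<in> SL (Suc n) lo hi"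
    then obtain b ys' where ys: "ys = b # ys'" "length ys' = n" "sorted (b # ys')"
      "set (b # ys') \<subseteq> {lo..hi}" by (auto simp: SL_def length_Suc_conv)
    show "ys \<in> Cons lo ` SL n lo hi \<union> SL (Suc n) (Suc lo) hi"
    proof (cases "b = lo")
      case True
      then show ?thesis using ys by (auto simp: SL_def)
    next
      case False
      then have "b \<ge> Suc lo" using ys by auto
      then show ?thesis using ys by (fastforce simp: SL_def)
    qed
  qed
next
  show "Cons lo ` SL n lo hi \<union> SL (Suc n) (Suc lo) hi \<subseteq> SL (Suc n) lo hi"
    using assms by (force simp: SL_def subset_iff)
qed

lemma card_SL_aux: "\<forall>lo. hi - lo = d \<longrightarrow> lo \<le> hi \<longrightarrow> card (SL n lo hi) = (n + d) choose n"
proof (induction n arbitrary: d)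
  case 0 then show ?case by (simp add: SL_0)
next
  case (Suc n)
  note IHn = Suc.IH
  show ?case
  proof (induction d)
    case 0
    show ?case
    proof (intro allI impI)
      fix lo assume h: "hi - lo = 0" "lo \<le> hi"
      then have "SL (Suc n) (Suc lo) hi = {}" by (intro SL_empty) auto
      then have "card (SL (Suc n) lo hi) = card (SL n lo hi)"
        using h(2) by (simp add: SL_decomp card_image)
      also have "\<dots> = 1" using IHn[of 0] h by auto
      finally show "card (SL (Suc n) lo hi) = (Suc n + 0) choose Suc n" by simp
    qed
  next
    case (Suc d)
    show ?case
    proof (intro allI impI)
      fix lo assume h: "hi - lo = Suc d" "lo \<le> hi"
      have disj: "Cons lo ` SL n lo hi \<inter> SL (Suc n) (Suc lo) hi = {}"
        by (auto simp: SL_def)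
      have "card (SL (Suc n) lo hi) = card (SL n lo hi) + card (SL (Suc n) (Suc lo) hi)"
        unfolding SL_decomp[OF h(2)]
        by (subst card_Un_disjoint) (auto simp: finite_SL disj card_image)
      also have "card (SL n lo hi) = (n + Suc d) choose n" using IHn[of "Suc d"] h by auto
      also have "card (SL (Suc n) (Suc lo) hi) = (Suc n + d) choose Suc n"
        using Suc.IH h by auto
      finally show "card (SL (Suc n) lo hi) = (Suc n + Suc d) choose Suc n"
        by simp
    qed
  qed
qed

lemma card_SL: "lo \<le> hi \<Longrightarrow> card (SL n lo hi) = (n + (hi - lo)) choose n"
  using card_SL_aux by blast

lemma gt_count:
  "xs \<in> SL n lo k \<Longrightarrow> card {ys \<in> SL n lo k. lex_less xs ys} = rk (map (\<lambda>a. k - a) xs)"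
proof (induction xs arbitrary: n lo)
  case Nil
  then have "n = 0" by (simp add: SL_def)
  then show ?case by (simp add: SL_0 lex_less_def)
next
  case (Cons a xs)
  obtain m where n: "n = Suc m" using Cons.prems by (auto simp: SL_def)
  have xs: "xs \<in> SL m a k" using Cons.prems n by (auto simp: SL_def subset_iff)
  have a: "lo \<le> a" "a \<le> k" using Cons.prems by (auto simp: SL_def)
  have eq: "{ys \<in> SL n lo k. lex_less (a # xs) ys}
      = Cons a ` {ys \<in> SL m a k. lex_less xs ys} \<union> SL (Suc m) (Suc a) k"
  proof
    show "{ys \<in> SL n lo k. lex_less (a # xs) ys}
      \<subseteq> Cons a ` {ys \<in> SL m a k. lex_less xs ys} \<union> SL (Suc m) (Suc a) k"
    proof
      fix ys assume "ys \<in> {ys \<in> SL n lo k. lex_less (a # xs) ys}"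
      then obtain b ys' where ys: "ys = b # ys'" "length ys' = m" "sorted (b # ys')"
        "set (b # ys') \<subseteq> {lo..k}" "a < b \<or> a = b \<and> lex_less xs ys'"
        by (auto simp: SL_def length_Suc_conv n lex_less_def)
      show "ys \<in> Cons a ` {ys \<in> SL m a k. lex_less xs ys} \<union> SL (Suc m) (Suc a) k"
      proof (cases "a < b")
        case True
        then show ?thesis using ys by (fastforce simp: SL_def)
      next
        case False
        then have "a = b" "lex_less xs ys'" using ys by auto
        moreover have "ys' \<in> SL m a k" using ys \<open>a = b\<close> by (auto simp: SL_def subset_iff)
        ultimately show ?thesis using ys by auto
      qed
    qed
  next
    show "Cons a ` {ys \<in> SL m a k. lex_less xs ys} \<union> SL (Suc m) (Suc a) k
      \<subseteq> {ys \<in> SL n lo k. lex_less (a # xs) ys}"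
    proof
      fix ys assume "ys \<in> Cons a ` {ys \<in> SL m a k. lex_less xs ys} \<union> SL (Suc m) (Suc a) k"
      then show "ys \<in> {ys \<in> SL n lo k. lex_less (a # xs) ys}"
      proof
        assume "ys \<in> Cons a ` {ys \<in> SL m a k. lex_less xs ys}"
        then show ?thesis using a by (force simp: SL_def n lex_less_def subset_iff)
      next
        assume h: "ys \<in> SL (Suc m) (Suc a) k"
        then obtain b ys' where ys: "ys = b # ys'" "length ys' = m" "sorted (b # ys')"
          "set (b # ys') \<subseteq> {Suc a..k}"
          by (auto simp: SL_def length_Suc_conv)
        then show ?thesis using a by (fastforce simp: SL_def n lex_less_def)
      qed
    qed
  qed
  have disj: "Cons a ` {ys \<in> SL m a k. lex_less xs ys} \<inter> SL (Suc m) (Suc a) k = {}"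
    by (auto simp: SL_def)
  have "card {ys \<in> SL n lo k. lex_less (a # xs) ys}
      = card {ys \<in> SL m a k. lex_less xs ys} + card (SL (Suc m) (Suc a) k)"
    unfolding eq by (subst card_Un_disjoint) (auto simp: finite_SL disj card_image)
  also have "card {ys \<in> SL m a k. lex_less xs ys} = rk (map (\<lambda>a. k - a) xs)"
    using Cons.IH xs by blast
  also have "card (SL (Suc m) (Suc a) k) = (if k - a = 0 then 0 else (m + (k - a)) choose (k - a - 1))"
  proof (cases "a = k")
    case True then show ?thesis by (simp add: SL_empty)
  next
    case False
    then have "card (SL (Suc m) (Suc a) k) = (Suc m + (k - Suc a)) choose Suc m"
      using a by (intro card_SL) auto
    also have "\<dots> = (m + (k - a)) choose (k - a - 1)"
    proof -
      have e: "Suc m + (k - Suc a) = m + (k - a)" using False a by auto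
      have "(m + (k - a)) choose Suc m = (m + (k - a)) choose (m + (k - a) - Suc m)"
        using False a by (intro binomial_symmetric) auto
      also have "m + (k - a) - Suc m = k - a - 1" by auto
      finally have "(m + (k - a)) choose Suc m = (m + (k - a)) choose (k - a - 1)" .
      then show ?thesis by (simp only: e)
    qed
    finally show ?thesis using False a by auto
  qed
  finally show ?case using xs by (simp add: SL_def)
qed

lemma lex_trans: "lex_less xs ys \<Longrightarrow> lex_less ys zs \<Longrightarrow> lex_less xs zs"
  unfolding lex_less_def by (erule lexord_trans) (auto simp: trans_def)

lemma lex_irrefl: "\<not> lex_less xs xs"
  unfolding lex_less_def by (intro lexord_irreflexive) auto

lemma lex_linear: "lex_less xs ys \<or> xs = ys \<or> lex_less ys xs"
  unfolding lex_less_def by (intro lexord_linear) auto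

definition gcount :: "nat list set \<Rightarrow> nat list \<Rightarrow> nat" where
  "gcount L xs = card {ys \<in> L. lex_less xs ys}"

lemma gcount_mono:
  assumes "finite L" "xs \<in> L" "ys \<in> L"
  shows "lex_less ys xs \<longleftrightarrow> gcount L xs < gcount L ys"
proof
  assume h: "lex_less ys xs"
  have "{zs \<in> L. lex_less xs zs} \<subset> {zs \<in> L. lex_less ys zs}"
    using h assms lex_trans lex_irrefl by blast
  then show "gcount L xs < gcount L ys" unfolding gcount_def
    using assms by (intro psubset_card_mono) auto
next
  assume h: "gcount L xs < gcount L ys"
  show "lex_less ys xs"
  proof (rule ccontr)
    assume "\<not> lex_less ys xs"
    then have "xs = ys \<or> lex_less xs ys" using lex_linear by blast
    then show False
    proof
      assume "xs = ys" then show False using h by simp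
    next
      assume l: "lex_less xs ys"
      have "{zs \<in> L. lex_less ys zs} \<subset> {zs \<in> L. lex_less xs zs}"
        using l assms lex_trans lex_irrefl by blast
      then have "gcount L ys < gcount L xs" unfolding gcount_def
        using assms by (intro psubset_card_mono) auto
      then show False using h by simp
    qed
  qed
qed

lemma gcount_bij:
  assumes "finite L"
  shows "bij_betw (gcount L) L {0..<card L}"
proof -
  have inj: "inj_on (gcount L) L"
  proof (rule inj_onI)
    fix xs ys assume h: "xs \<in> L" "ys \<in> L" "gcount L xs = gcount L ys"
    show "xs = ys" using lex_linear[of xs ys] gcount_mono[OF assms] h by fastforce
  qed
  have sub: "gcount L ` L \<subseteq> {0..<card L}"
  proof
    fix c assume "c \<in> gcount L ` L"
    then obtain xs where xs: "xs \<in> L" "c = gcount L xs" by auto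
    have "{ys \<in> L. lex_less xs ys} \<subset> L" using xs lex_irrefl by blast
    then have "gcount L xs < card L" unfolding gcount_def using assms psubset_card_mono by blast
    then show "c \<in> {0..<card L}" using xs by simp
  qed
  have "gcount L ` L = {0..<card L}"
    using sub by (intro card_subset_eq) (auto simp: card_image[OF inj])
  then show ?thesis using inj by (simp add: bij_betw_def)
qed

lemma len_vec: "length (sorted_list_of_multiset x) = size x"
  by (metis mset_sorted_list_of_multiset size_mset)

lemma vec_bij: "bij_betw vec (Mset_n k n) (SL n 0 k)"
proof (rule bij_betw_byWitness[where f' = mset])
  show "\<forall>a\<in>Mset_n k n. mset (vec a) = a" by (simp add: vec_def)
  show "\<forall>a'\<in>SL n 0 k. vec (mset a') = a'" by (simp add: vec_def SL_def sorted_sort_id)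
  show "vec ` Mset_n k n \<subseteq> SL n 0 k"
    by (auto simp: vec_def SL_def Mset_n_def len_vec)
  show "mset ` SL n 0 k \<subseteq> Mset_n k n"
    by (auto simp: SL_def Mset_n_def)
qed

theorem theorem4:
  fixes k n :: nat
  shows "bij_betw (rho k) (Mset_n k n) {0..<card (Mset_n k n)} \<and>
    (\<forall>x\<in>Mset_n k n. \<forall>y\<in>Mset_n k n. fairer x y \<longleftrightarrow> rho k x < rho k y)"
proof -
  let ?L = "SL n 0 k"
  have rg: "rho k x = gcount ?L (vec x)" if "x \<in> Mset_n k n" for x
  proof -
    have "vec x \<in> ?L" using vec_bij that by (auto simp: bij_betw_def)
    then show ?thesis
      unfolding rho_def gcount_def rank_rk using gt_count by metis
  qed
  have cardeq: "card (Mset_n k n) = card ?L" using vec_bij by (rule bij_betw_same_card)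
  have b: "bij_betw (gcount ?L \<circ> vec) (Mset_n k n) {0..<card ?L}"
    using vec_bij gcount_bij[OF finite_SL] by (rule bij_betw_trans)
  have 1: "bij_betw (rho k) (Mset_n k n) {0..<card (Mset_n k n)}"
    using b unfolding cardeq by (rule bij_betw_cong[THEN iffD1, rotated]) (simp add: rg)
  have 2: "fairer x y \<longleftrightarrow> rho k x < rho k y" if "x \<in> Mset_n k n" "y \<in> Mset_n k n" for x y
  proof -
    have "vec x \<in> ?L" "vec y \<in> ?L" using vec_bij that by (auto simp: bij_betw_def)
    then show ?thesis unfolding fairer_def rg[OF that(1)] rg[OF that(2)]
      by (rule gcount_mono[OF finite_SL])
  qed
  show ?thesis using 1 2 by blast
qed

end
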